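(* Let $p\ge5$ be a prime, let $a$ be a positive integer with $\gcd(a,p)=1$, and let $r\ge0$, $m\ge1$ be integers. Let $b_{4,r,a,m}(n)$ be the number of partitions of $n$ in which every multiplicity has the form $j(pr+a)+pk$ with $j\in\{0,1,2,3\}$ and $0\le k\le m-1$. Let $t$ be an integer such that $8ta^{-1}+1$ is a quadratic nonresidue modulo $p$, where $a^{-1}$ is the inverse of $a$ modulo $p$. Then $b_{4,r,a,m}(pn+t)\equiv0\pmod2$ for all $n\ge0$.
   Context: Multiplicity of a part means the number of times it appears in the partition. Equivalently, $\sum_{n\ge0}b_{4,r,a,m}(n)q^n=\prod_{n\ge1}\frac{(1-q^{4(pr+a)n})(1-q^{pmn})}{(1-q^{(pr+a)n})(1-q^{pn})}$. *)

theory Defs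
  imports "HOL-Number_Theory.Number_Theory"
begin

text \<open>A partition of n is encoded by its multiplicity function f (f i = number of
times the part i occurs); parts lie in {1..n}.\<close>

definition allowed_mult :: "nat \<Rightarrow> nat \<Rightarrow> nat \<Rightarrow> nat \<Rightarrow> nat \<Rightarrow> bool" where
  "allowed_mult p r a m c \<longleftrightarrow> (\<exists>j<4. \<exists>k<m. c = j * (p * r + a) + p * k)"

definition b4 :: "nat \<Rightarrow> nat \<Rightarrow> nat \<Rightarrow> nat \<Rightarrow> nat \<Rightarrow> nat" where
  "b4 p r a m n = card {f :: nat \<Rightarrow> nat.
      (\<forall>i. f i \<noteq> 0 \<longrightarrow> 1 \<le> i \<and> i \<le> n) \<and>
      (\<Sum>i=1..n. i * f i) = n \<and>
      (\<forall>i\<in>{1..n}. allowed_mult p r a m (f i))}"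

end

theory Submission
  imports Defs "HOL-Library.Z2" "HOL-Computational_Algebra.Formal_Power_Series"
begin
unbundle fps_syntax

declare add_bit_eq_xor[simp del] mult_bit_eq_and[simp del]

lemma bit_of_nat_eq0: "of_nat n = (0::bit) \<longleftrightarrow> even n"
  by (metis even_of_nat_iff bit_not_one_iff odd_one of_nat_0 even_zero bit_not_zero_iff)

lemma bit_add_self[simp]: "(x::bit) + x = 0"
  by (metis bit_2_eq_0 mult_2 mult_zero_left)

lemma bit_mult_self[simp]: "(x::bit) * x = x"
  by (cases "x = 0") (auto simp: bit_not_zero_iff)

lemma sum_invol_bit:
  fixes g :: "'a \<Rightarrow> bit"
  assumes "finite S" "\<And>x. x\<in>S \<Longrightarrow> \<sigma> x \<in> S" "\<And>x. x\<in>S \<Longrightarrow> \<sigma> (\<sigma> x) = x"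
    "\<And>x. x\<in>S \<Longrightarrow> g (\<sigma> x) = g x"
  shows "sum g S = sum g {x\<in>S. \<sigma> x = x}"
  using assms
proof (induction "card S" arbitrary: S rule: less_induct)
  case less
  show ?case
  proof (cases "\<forall>x\<in>S. \<sigma> x = x")
    case True
    then have "{x\<in>S. \<sigma> x = x} = S" by auto
    then show ?thesis by simp
  next
    case False
    then obtain x where x: "x \<in> S" "\<sigma> x \<noteq> x" by auto
    define S' where "S' = S - {x, \<sigma> x}"
    have sx: "\<sigma> x \<in> S" using less x by auto
    have fin: "finite S'" using less by (simp add: S'_def)
    have cl: "\<sigma> y \<in> S'" if "y \<in> S'" for y
    proof -
      have yS: "y \<in> S" "y \<noteq> x" "y \<noteq> \<sigma> x" using that by (auto simp: S'_def)
      have "\<sigma> y \<noteq> x" using yS less(4)[of y] by metis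
      moreover have "\<sigma> y \<noteq> \<sigma> x" using yS less(4)[of y] less(4)[of x] x by metis
      ultimately show ?thesis using yS less(3) by (auto simp: S'_def)
    qed
    have "S' \<subset> S" using x by (auto simp: S'_def)
    then have lt: "card S' < card S" using less(2) by (rule psubset_card_mono[rotated])
    have IH: "sum g S' = sum g {y\<in>S'. \<sigma> y = y}"
      by (rule less(1)[OF lt fin]) (use cl less in \<open>auto simp: S'_def\<close>)
    have fx: "{y\<in>S'. \<sigma> y = y} = {y\<in>S. \<sigma> y = y}" using x less(4)[of x] by (auto simp: S'_def)
    have "sum g S = sum g S' + sum g {x, \<sigma> x}"
      unfolding S'_def using less(2) x sx by (intro sum.subset_diff) auto
    also have "sum g {x, \<sigma> x} = 0" using x less(5)[of x] by simp
    finally show ?thesis using IH fx by simp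
  qed
qed

definition dil :: "nat \<Rightarrow> 'a::comm_ring_1 fps \<Rightarrow> 'a fps" where
  "dil k f = Abs_fps (\<lambda>n. if k dvd n then f $ (n div k) else 0)"

lemma dil_nth: "dil k f $ n = (if k dvd n then f $ (n div k) else 0)"
  by (simp add: dil_def)

lemma dil_compose:
  assumes "k > 0"
  shows "dil k (f::'a::comm_ring_1 fps) = f oo (fps_X ^ k)"
proof (rule fps_ext)
  fix n
  have "(f oo fps_X ^ k) $ n = (\<Sum>i=0..n. f $ i * (if n = k * i then 1 else 0))"
    by (simp add: fps_compose_nth power_mult[symmetric])
  also have "\<dots> = (\<Sum>i\<in>{0..n}. if i = n div k \<and> k dvd n then f $ i else 0)"
    by (rule sum.cong) (use assms in auto)
  also have "\<dots> = (if k dvd n then f $ (n div k) else 0)"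
    by (auto simp: sum.delta' div_le_dividend)
  finally show "dil k f $ n = (f oo fps_X ^ k) $ n" by (simp add: dil_nth)
qed

lemma dil_mult:
  assumes "k > 0"
  shows "dil k ((f::'a::idom fps) * g) = dil k f * dil k g"
  using assms by (simp add: dil_compose fps_compose_mult_distrib)

lemma dil_one[simp]: "k > 0 \<Longrightarrow> dil k (1::'a::comm_ring_1 fps) = 1"
  by (rule fps_ext) (auto simp: dil_nth)

lemma dil_dil:
  assumes "a > 0" "b > 0" shows "dil a (dil b f) = dil (a*b) f"
proof (rule fps_ext)
  fix n
  have e: "(a dvd n \<and> b dvd n div a) \<longleftrightarrow> a*b dvd n"
  proof
    assume "a dvd n \<and> b dvd n div a"
    then have d1: "a dvd n" and d2: "b dvd n div a" by auto
    from d1 obtain j where j: "n = a*j" ..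
    with assms have "n div a = j" by simp
    with d2 obtain k where "j = b*k" by auto
    then show "a*b dvd n" using j by (simp add: mult.assoc)
  next
    assume "a*b dvd n"
    then obtain k where "n = a*b*k" by (auto elim!: dvdE)
    then show "a dvd n \<and> b dvd n div a" using assms by (auto simp: mult.assoc)
  qed
  show "dil a (dil b f) $ n = dil (a*b) f $ n"
    using e by (auto simp: dil_nth div_mult2_eq)
qed

lemma frob: "(f::bit fps) * f = dil 2 f"
proof (rule fps_ext)
  fix n
  have "(f * f) $ n = (\<Sum>i\<in>{0..n}. f$i * f$(n-i))" by (simp add: fps_mult_nth)
  also have "\<dots> = (\<Sum>i\<in>{i\<in>{0..n}. n - i = i}. f$i * f$(n-i))"
    by (rule sum_invol_bit) (auto simp: mult.commute)
  also have "\<dots> = (if 2 dvd n then f $ (n div 2) else 0)"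
  proof (cases "even n")
    case True
    then have "{i\<in>{0..n}. n - i = i} = {n div 2}" by auto
    moreover have "n - n div 2 = n div 2" using True by presburger
    ultimately show ?thesis using True by simp
  next
    case False
    have "\<And>i. n - i = i \<Longrightarrow> i \<le> n \<Longrightarrow> even n" by presburger
    then have E: "{i\<in>{0..n}. n - i = i} = {}" using False by auto
    show ?thesis unfolding E using False by simp
  qed
  finally show "(f*f) $ n = dil 2 f $ n" by (simp add: dil_nth)
qed

lemma aux1: "{i. 2*i \<in> (\<lambda>i. 2*i) ` S1 \<union> (\<lambda>i. 2*i+1) ` S2} = (S1::nat set)"
  by (auto; presburger)
lemma aux2: "{i. 2*i+1 \<in> (\<lambda>i. 2*i) ` S1 \<union> (\<lambda>i. 2*i+1) ` S2} = (S2::nat set)"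
  by (auto; presburger)
lemma aux3: "(\<lambda>i. 2*i) ` {i. 2*i \<in> S} \<union> (\<lambda>i. 2*i+1) ` {i. 2*i+1 \<in> S} = (S::nat set)"
proof -
  have "x \<in> (\<lambda>i. 2*i) ` {i. 2*i \<in> S} \<union> (\<lambda>i. 2*i+1) ` {i. 2*i+1 \<in> S}" if "x \<in> S" for x
  proof (cases "even x")
    case True then show ?thesis using that by (auto elim!: evenE)
  next
    case False then show ?thesis using that by (auto elim!: oddE)
  qed
  then show ?thesis by auto
qed

definition gf :: "'a set \<Rightarrow> ('a \<Rightarrow> nat) \<Rightarrow> bit fps" where
  "gf P w = Abs_fps (\<lambda>n. of_nat (card {x\<in>P. w x = n}))"

definition finfib :: "'a set \<Rightarrow> ('a \<Rightarrow> nat) \<Rightarrow> bool" where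
  "finfib P w \<longleftrightarrow> (\<forall>n. finite {x\<in>P. w x = n})"

lemma gf_nth: "gf P w $ n = of_nat (card {x\<in>P. w x = n})"
  by (simp add: gf_def)

lemma gf_mult:
  assumes "finfib P w" "finfib Q v"
  shows "gf P w * gf Q v = gf (P \<times> Q) (\<lambda>(x,y). w x + v y)"
proof (rule fps_ext)
  fix n
  have eq: "{z \<in> P \<times> Q. (case z of (x,y) \<Rightarrow> w x + v y) = n} =
     (\<Union>i\<in>{0..n}. {x\<in>P. w x = i} \<times> {y\<in>Q. v y = n - i})" by auto
  have "card (\<Union>i\<in>{0..n}. {x\<in>P. w x = i} \<times> {y\<in>Q. v y = n - i}) =
      (\<Sum>i\<in>{0..n}. card ({x\<in>P. w x = i} \<times> {y\<in>Q. v y = n - i}))"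
    by (rule card_UN_disjoint) (use assms in \<open>auto simp: finfib_def\<close>)
  then show "(gf P w * gf Q v) $ n = gf (P \<times> Q) (\<lambda>(x,y). w x + v y) $ n"
    by (simp add: fps_mult_nth gf_nth card_cartesian_product eq)
qed

lemma finfib_prod:
  assumes "finfib P w" "finfib Q v"
  shows "finfib (P \<times> Q) (\<lambda>(x,y). w x + v y)"
  unfolding finfib_def
proof
  fix n
  have "{z \<in> P \<times> Q. (case z of (x,y) \<Rightarrow> w x + v y) = n} \<subseteq>
     (\<Union>i\<in>{0..n}. {x\<in>P. w x = i} \<times> {y\<in>Q. v y = n - i})" by auto
  moreover have "finite (\<Union>i\<in>{0..n}. {x\<in>P. w x = i} \<times> {y\<in>Q. v y = n - i})"
    using assms by (auto simp: finfib_def)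
  ultimately show "finite {z \<in> P \<times> Q. (case z of (x,y) \<Rightarrow> w x + v y) = n}"
    by (rule finite_subset)
qed

lemma gf_bij:
  assumes "bij_betw h P Q" "\<And>x. x\<in>P \<Longrightarrow> v (h x) = w x"
  shows "gf P w = gf Q v"
proof (rule fps_ext)
  fix n
  have "h ` {x\<in>P. w x = n} = {y\<in>Q. v y = n}"
  proof
    show "h ` {x\<in>P. w x = n} \<subseteq> {y\<in>Q. v y = n}"
      using assms bij_betw_apply by fastforce
  next
    show "{y\<in>Q. v y = n} \<subseteq> h ` {x\<in>P. w x = n}"
    proof
      fix y assume y: "y \<in> {y\<in>Q. v y = n}"
      then obtain x where "x \<in> P" "y = h x" using assms(1) by (auto simp: bij_betw_def)
      then show "y \<in> h ` {x\<in>P. w x = n}" using y assms(2) by auto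
    qed
  qed
  moreover have "inj_on h {x\<in>P. w x = n}"
    using assms(1) by (auto simp: bij_betw_def inj_on_def)
  ultimately have "card {x\<in>P. w x = n} = card {y\<in>Q. v y = n}"
    by (metis card_image)
  then show "gf P w $ n = gf Q v $ n" by (simp add: gf_nth)
qed

lemma gf_scale:
  assumes "k > 0"
  shows "gf P (\<lambda>x. k * w x) = dil k (gf P w)"
proof (rule fps_ext)
  fix n
  show "gf P (\<lambda>x. k * w x) $ n = dil k (gf P w) $ n"
  proof (cases "k dvd n")
    case True
    then have "{x\<in>P. k * w x = n} = {x\<in>P. w x = n div k}" using assms by auto
    then show ?thesis using True by (simp add: gf_nth dil_nth)
  next
    case False
    then have E: "{x\<in>P. k * w x = n} = {}" by auto
    show ?thesis unfolding gf_nth dil_nth E using False by simp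
  qed
qed

definition wt :: "(nat \<Rightarrow> nat) \<Rightarrow> nat set \<Rightarrow> nat" where
  "wt \<phi> S = (\<Sum>i\<in>S. \<phi> i)"

definition FS :: "nat set set" where "FS = {S. finite S}"

definition Dg :: "(nat \<Rightarrow> nat) \<Rightarrow> bit fps" where "Dg \<phi> = gf FS (wt \<phi>)"

lemma wt_ge: "finite S \<Longrightarrow> i \<in> S \<Longrightarrow> \<phi> i \<le> wt \<phi> S"
  unfolding wt_def by (rule member_le_sum) auto

lemma finfib_wt:
  assumes "\<And>i. i < \<phi> i"
  shows "finfib FS (wt \<phi>)"
  unfolding finfib_def
proof
  fix n
  have "{S\<in>FS. wt \<phi> S = n} \<subseteq> Pow {..<n}"
  proof
    fix S assume S: "S \<in> {S\<in>FS. wt \<phi> S = n}"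
    have "i < n" if "i \<in> S" for i
      using wt_ge[of S i \<phi>] S that assms[of i] by (auto simp: FS_def)
    then show "S \<in> Pow {..<n}" by auto
  qed
  then show "finite {S\<in>FS. wt \<phi> S = n}" by (rule finite_subset) auto
qed

lemma Dg_scale:
  assumes "k > 0" shows "Dg (\<lambda>i. k * \<phi> i) = dil k (Dg \<phi>)"
proof -
  have "wt (\<lambda>i. k * \<phi> i) = (\<lambda>S. k * wt \<phi> S)"
    by (auto simp: wt_def sum_distrib_left)
  then show ?thesis using gf_scale[OF assms] by (simp add: Dg_def)
qed

lemma Dg_split:
  assumes "\<And>i. i < \<phi> i"
  shows "Dg \<phi> = Dg (\<lambda>i. \<phi> (2*i)) * Dg (\<lambda>i. \<phi> (2*i+1))"
proof -
  have f1: "finfib FS (wt (\<lambda>i. \<phi> (2*i)))"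
    by (rule finfib_wt) (metis assms le_less_trans mult_2 le_add1)
  have f2: "finfib FS (wt (\<lambda>i. \<phi> (2*i+1)))"
    by (rule finfib_wt) (metis assms le_less_trans mult_2 le_add1 add.commute less_imp_le_nat trans_less_add2)
  define g where "g = (\<lambda>(S1::nat set, S2::nat set). (\<lambda>i. 2*i) ` S1 \<union> (\<lambda>i. 2*i+1) ` S2)"
  define h where "h = (\<lambda>S::nat set. ({i. 2*i \<in> S}, {i. 2*i+1 \<in> S}))"
  have bij: "bij_betw g (FS \<times> FS) FS"
  proof (rule bij_betw_byWitness[where f' = h])
    show "\<forall>a\<in>FS \<times> FS. h (g a) = a"
      unfolding g_def h_def by (simp only: case_prod_beta aux1 aux2 prod.collapse) auto
    show "\<forall>a'\<in>FS. g (h a') = a'"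
      unfolding g_def h_def by (simp only: case_prod_beta aux3 fst_conv snd_conv) auto
    show "g ` (FS \<times> FS) \<subseteq> FS" by (auto simp: g_def FS_def)
    show "h ` FS \<subseteq> FS \<times> FS"
    proof
      fix y assume "y \<in> h ` FS"
      then obtain S where S: "finite S" "y = h S" by (auto simp: FS_def)
      have "finite ((\<lambda>i. 2*i) -` S)" by (rule finite_vimageI) (use S in \<open>auto simp: inj_on_def\<close>)
      moreover have "finite ((\<lambda>i. 2*i+1) -` S)" by (rule finite_vimageI) (use S in \<open>auto simp: inj_on_def\<close>)
      ultimately show "y \<in> FS \<times> FS" using S by (auto simp: h_def FS_def vimage_def)
    qed
  qed
  have w: "wt \<phi> (g z) = (case z of (x, y) \<Rightarrow> wt (\<lambda>i. \<phi> (2*i)) x + wt (\<lambda>i. \<phi> (2*i+1)) y)"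
    if zin: "z \<in> FS \<times> FS" for z
  proof -
    obtain S1 S2 where z: "z = (S1, S2)" "finite S1" "finite S2" using zin by (cases z) (auto simp: FS_def)
    have d: "(\<lambda>i. 2*i) ` S1 \<inter> (\<lambda>i. 2*i+1) ` S2 = {}" by auto presburger
    have "wt \<phi> (g z) = wt \<phi> ((\<lambda>i. 2*i) ` S1) + wt \<phi> ((\<lambda>i. 2*i+1) ` S2)"
      unfolding wt_def g_def z(1) using z d by (simp add: sum.union_disjoint)
    also have "\<dots> = wt (\<lambda>i. \<phi> (2*i)) S1 + wt (\<lambda>i. \<phi> (2*i+1)) S2"
      unfolding wt_def by (simp add: sum.reindex inj_on_def)
    finally show ?thesis using z by simp
  qed
  have "Dg (\<lambda>i. \<phi> (2*i)) * Dg (\<lambda>i. \<phi> (2*i+1)) =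
     gf (FS \<times> FS) (\<lambda>(x,y). wt (\<lambda>i. \<phi> (2*i)) x + wt (\<lambda>i. \<phi> (2*i+1)) y)"
    unfolding Dg_def by (rule gf_mult[OF f1 f2])
  also have "\<dots> = gf FS (wt \<phi>)" by (rule gf_bij[OF bij]) (simp add: w)
  finally show ?thesis by (simp add: Dg_def)
qed

lemma Dg_0: assumes "\<And>i. 0 < \<phi> i" shows "Dg \<phi> $ 0 = 1"
proof -
  have "{S\<in>FS. wt \<phi> S = 0} = {{}}"
    apply (auto simp: FS_def wt_def) using assms by (metis less_irrefl)
  then show ?thesis by (simp add: Dg_def gf_nth)
qed



definition D1 :: "bit fps" where "D1 = Dg Suc"
definition Og :: "bit fps" where "Og = Dg (\<lambda>i. 2*i+1)"

lemma D1_split: "D1 = Og * dil 2 D1"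
proof -
  have "D1 = Dg (\<lambda>i. Suc (2*i)) * Dg (\<lambda>i. Suc (2*i+1))" unfolding D1_def by (rule Dg_split) simp
  also have "(\<lambda>i. Suc (2*i)) = (\<lambda>i. 2*i+1)" by auto
  also have "(\<lambda>i. Suc (2*i+1)) = (\<lambda>i. 2 * Suc i)" by auto
  also have "Dg (\<lambda>i. 2 * Suc i) = dil 2 D1" unfolding D1_def by (rule Dg_scale) simp
  finally show ?thesis by (simp add: Og_def)
qed

lemma fix1:
  assumes "H = dil 2 H" "H $ 0 = 1"
  shows "H = (1::bit fps)"
proof (rule fps_ext)
  fix n
  show "H $ n = 1 $ n"
  proof (induction n rule: less_induct)
    case (less n)
    show ?case
    proof (cases "n = 0")
      case True
      then show ?thesis using assms(2) by simp
    next
      case False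
      have "H $ n = dil 2 H $ n" using assms(1) by (rule arg_cong[where f="\<lambda>h. h $ n"])
      also have "\<dots> = (if even n then H $ (n div 2) else 0)" by (simp add: dil_nth)
      also have "\<dots> = 0" using less[of "n div 2"] False by auto
      finally show ?thesis using False by simp
    qed
  qed
qed

lemma H_one: "Og * D1 = 1"
proof (rule fix1)
  have "Og * D1 = Og * (Og * dil 2 D1)" using D1_split by (rule arg_cong)
  also have "\<dots> = (Og * Og) * dil 2 D1" by (simp add: mult.assoc)
  also have "\<dots> = dil 2 Og * dil 2 D1" by (simp add: frob)
  also have "\<dots> = dil 2 (Og * D1)" by (simp add: dil_mult)
  finally show "Og * D1 = dil 2 (Og * D1)" .
  show "(Og * D1) $ 0 = 1" unfolding Og_def D1_def by (simp add: Dg_0)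
qed

lemma Og_split: "Og = Dg (\<lambda>i. 4*i+1) * Dg (\<lambda>i. 4*i+3)"
proof -
  have "Og = Dg (\<lambda>i. 2*(2*i)+1) * Dg (\<lambda>i. 2*(2*i+1)+1)" unfolding Og_def by (rule Dg_split) simp
  also have "(\<lambda>i. 2*(2*i)+1) = (\<lambda>i::nat. 4*i+1)" by auto
  also have "(\<lambda>i. 2*(2*i+1)+1) = (\<lambda>i::nat. 4*i+3)" by auto
  finally show ?thesis .
qed

definition Gg :: "bit fps" where "Gg = D1 * dil 2 D1"

lemma Gg_eq: "Gg = Og * dil 4 D1"
proof -
  have "Gg = (Og * dil 2 D1) * dil 2 D1" unfolding Gg_def using D1_split by (rule arg_cong)
  also have "\<dots> = Og * (dil 2 D1 * dil 2 D1)" by (simp add: mult.assoc)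
  also have "\<dots> = Og * dil 2 (dil 2 D1)" by (simp add: frob)
  also have "\<dots> = Og * dil 4 D1" by (simp add: dil_dil)
  finally show ?thesis .
qed

definition wAB :: "nat set \<times> nat set \<Rightarrow> nat" where
  "wAB x = (case x of (A,B) \<Rightarrow> wt (\<lambda>i. 4*i+3) A + wt (\<lambda>j. 4*j+1) B)"
definition wAB' :: "nat set \<times> nat set \<Rightarrow> nat" where
  "wAB' x = (case x of (A,B) \<Rightarrow> wt (\<lambda>i. 4*i+2) A + wt (\<lambda>j. 4*j+2) B)"
definition chg :: "nat set \<times> nat set \<Rightarrow> int" where
  "chg x = (case x of (A,B) \<Rightarrow> int (card A) - int (card B))"
definition cnt :: "int \<Rightarrow> int \<Rightarrow> nat" where
  "cnt m s = card {x \<in> FS \<times> FS. chg x = m \<and> int (wAB x) = s}"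

definition Sh :: "nat set \<times> nat set \<Rightarrow> nat set \<times> nat set" where
  "Sh x = (case x of (A,B) \<Rightarrow> if 0 \<in> B then (Suc ` A, (\<lambda>j. j - 1) ` (B - {0}))
      else (insert 0 (Suc ` A), (\<lambda>j. j - 1) ` B))"
definition Sh' :: "nat set \<times> nat set \<Rightarrow> nat set \<times> nat set" where
  "Sh' x = (case x of (A,B) \<Rightarrow> if 0 \<in> A then ((\<lambda>j. j - 1) ` (A - {0}), Suc ` B)
      else ((\<lambda>j. j - 1) ` A, insert 0 (Suc ` B)))"

lemma pred_suc_img: "(\<lambda>j. j - 1) ` (Suc ` A) = A"
  by (simp add: image_image)

lemma pred_suc_img': "(\<lambda>j. j - Suc 0) ` (Suc ` A) = A"
  by (simp add: image_image)

lemma suc_pred_img: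
  assumes "0 \<notin> B" shows "Suc ` ((\<lambda>j. j - 1) ` B) = B"
proof -
  have "Suc ` ((\<lambda>j. j - 1) ` B) = (\<lambda>j. Suc (j - 1)) ` B" by (simp only: image_image)
  also have "\<dots> = (\<lambda>j. j) ` B"
  proof (rule image_cong)
    fix x assume "x \<in> B"
    then have "x \<noteq> 0" using assms by metis
    then show "Suc (x - 1) = x" by (cases x) auto
  qed simp
  finally show ?thesis by simp
qed

lemma inj_pred:
  assumes "0 \<notin> B" shows "inj_on (\<lambda>j. j - 1) (B::nat set)"
proof (rule inj_onI)
  fix x y assume xy: "x \<in> B" "y \<in> B" "x - 1 = y - 1"
  then have "x \<noteq> 0" "y \<noteq> 0" using assms by metis+
  then show "x = y" using xy(3) by (cases x; cases y) auto
qed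

lemma Sh_inv1: "Sh' (Sh x) = x"
proof (cases x)
  case (Pair A B)
  show ?thesis
  proof (cases "0 \<in> B")
    case True
    have e: "Suc ` ((\<lambda>j. j - 1) ` (B - {0})) = B - {0}" by (rule suc_pred_img) simp
    have "Sh x = (Suc ` A, (\<lambda>j. j - 1) ` (B - {0}))" using True Pair by (simp add: Sh_def)
    moreover have "0 \<notin> Suc ` A" by auto
    ultimately have "Sh' (Sh x) = ((\<lambda>j. j - 1) ` (Suc ` A), insert 0 (Suc ` ((\<lambda>j. j - 1) ` (B - {0}))))"
      by (simp add: Sh'_def)
    then show ?thesis unfolding e using True Pair by (auto simp: pred_suc_img')
  next
    case False
    have e: "Suc ` ((\<lambda>j. j - 1) ` B) = B" by (rule suc_pred_img) (use False in simp)
    have "Sh x = (insert 0 (Suc ` A), (\<lambda>j. j - 1) ` B)" using False Pair by (simp add: Sh_def)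
    then have "Sh' (Sh x) = ((\<lambda>j. j - 1) ` (insert 0 (Suc ` A) - {0}), Suc ` ((\<lambda>j. j - 1) ` B))"
      by (simp add: Sh'_def)
    moreover have "insert 0 (Suc ` A) - {0} = Suc ` A" by auto
    ultimately show ?thesis unfolding e using Pair by (simp add: pred_suc_img')
  qed
qed

lemma Sh_inv2: "Sh (Sh' x) = x"
proof (cases x)
  case (Pair A B)
  show ?thesis
  proof (cases "0 \<in> A")
    case True
    have e: "Suc ` ((\<lambda>j. j - 1) ` (A - {0})) = A - {0}" by (rule suc_pred_img) simp
    have "Sh' x = ((\<lambda>j. j - 1) ` (A - {0}), Suc ` B)" using True Pair by (simp add: Sh'_def)
    moreover have "0 \<notin> Suc ` B" by auto
    ultimately have "Sh (Sh' x) = (insert 0 (Suc ` ((\<lambda>j. j - 1) ` (A - {0}))), (\<lambda>j. j - 1) ` (Suc ` B))"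
      by (simp add: Sh_def)
    then show ?thesis unfolding e using True Pair by (auto simp: pred_suc_img')
  next
    case False
    have e: "Suc ` ((\<lambda>j. j - 1) ` A) = A" by (rule suc_pred_img) (use False in simp)
    have "Sh' x = ((\<lambda>j. j - 1) ` A, insert 0 (Suc ` B))" using False Pair by (simp add: Sh'_def)
    moreover have "0 \<notin> Suc ` ((\<lambda>j. j - 1) ` A)" unfolding e using False .
    ultimately have "Sh (Sh' x) = (Suc ` ((\<lambda>j. j - 1) ` A), (\<lambda>j. j - 1) ` (Suc ` B))"
      by (simp add: Sh_def)
    then show ?thesis unfolding e using Pair by (simp add: pred_suc_img')
  qed
qed

lemma Sh_FS: "x \<in> FS \<times> FS \<Longrightarrow> Sh x \<in> FS \<times> FS"
  by (cases x) (auto simp: Sh_def FS_def)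

lemma Sh'_FS: "x \<in> FS \<times> FS \<Longrightarrow> Sh' x \<in> FS \<times> FS"
  by (cases x) (auto simp: Sh'_def FS_def)

lemma wt3_suc: "finite A \<Longrightarrow> wt (\<lambda>i. 4*i+3) (Suc ` A) = wt (\<lambda>i. 4*i+3) A + 4 * card A"
proof -
  have "wt (\<lambda>i. 4*i+3) (Suc ` A) = (\<Sum>i\<in>A. 4*Suc i+3)" by (simp add: wt_def sum.reindex)
  also have "\<dots> = (\<Sum>i\<in>A. (4*i+3) + 4)" by simp
  also have "\<dots> = wt (\<lambda>i. 4*i+3) A + 4 * card A" by (simp add: wt_def sum.distrib)
  finally show "wt (\<lambda>i. 4*i+3) (Suc ` A) = wt (\<lambda>i. 4*i+3) A + 4 * card A" .
qed

lemma wt1_pred: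
  assumes "0 \<notin> B" "finite B"
  shows "wt (\<lambda>j. 4*j+1) ((\<lambda>j. j - 1) ` B) + 4 * card B = wt (\<lambda>j. 4*j+1) B"
proof -
  have inj: "inj_on (\<lambda>j. j - 1) B" using assms(1) by (rule inj_pred)
  have r: "sum (\<lambda>j. 4*j+1) ((\<lambda>j. j - 1) ` B) = sum ((\<lambda>j. 4*j+1) \<circ> (\<lambda>j. j - 1)) B"
    by (rule sum.reindex[OF inj])
  have l: "wt (\<lambda>j. 4*j+1) ((\<lambda>j. j - 1) ` B) = (\<Sum>j\<in>B. 4*(j-1)+1)"
    unfolding wt_def r comp_def ..
  have "(\<Sum>j\<in>B. 4*j+1) = (\<Sum>j\<in>B. (4*(j-1)+1) + 4)"
  proof (rule sum.cong)
    fix x assume "x \<in> B"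
    then have "x \<noteq> 0" using assms by metis
    then show "4*x+1 = (4*(x-1)+1) + 4" by (cases x) auto
  qed simp
  also have "\<dots> = (\<Sum>j\<in>B. 4*(j-1)+1) + (\<Sum>j\<in>B. 4)" by (rule sum.distrib)
  also have "(\<Sum>j\<in>B. (4::nat)) = 4 * card B" by simp
  finally show ?thesis using l by (simp add: wt_def)
qed

lemma card_pred: "0 \<notin> B \<Longrightarrow> card ((\<lambda>j. j - 1) ` B) = card (B::nat set)"
  by (rule card_image) (rule inj_pred)

lemma Sh_chg_w:
  assumes "finite A" "finite B"
  shows "chg (Sh (A,B)) = chg (A,B) + 1 \<and> int (wAB (Sh (A,B))) = int (wAB (A,B)) + 4 * chg (A,B) + 3"
proof -
  have e2: "int (wAB (A,B)) = int (wt (\<lambda>i. 4*i+3) A) + int (wt (\<lambda>j. 4*j+1) B)" by (simp add: wAB_def)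
  have e4: "chg (A,B) = int (card A) - int (card B)" by (simp add: chg_def)
  have f1: "int (wt (\<lambda>i. 4*i+3) (Suc ` A)) = int (wt (\<lambda>i. 4*i+3) A) + 4 * int (card A)"
    using arg_cong[where f=int, OF wt3_suc[OF assms(1)]] by simp
  have cA: "card (Suc ` A) = card A" by (intro card_image) (simp add: inj_on_def)
  show ?thesis
  proof (cases "0 \<in> B")
    case True
    define B0 where "B0 = B - {0}"
    have B0: "0 \<notin> B0" "finite B0" using assms by (auto simp: B0_def)
    have cB: "card B = card B0 + 1" using card_Suc_Diff1[OF assms(2) True] unfolding B0_def
      by simp
    have wB: "wt (\<lambda>j. 4*j+1) B = wt (\<lambda>j. 4*j+1) B0 + 1"
      using True assms unfolding B0_def wt_def by (simp add: sum.remove)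
    have Sh: "Sh (A,B) = (Suc ` A, (\<lambda>j. j - 1) ` B0)" using True by (simp add: Sh_def B0_def)
    have e1: "int (wAB (Sh (A,B))) = int (wt (\<lambda>i. 4*i+3) (Suc ` A)) + int (wt (\<lambda>j. 4*j+1) ((\<lambda>j. j - 1) ` B0))"
      by (simp add: Sh wAB_def)
    have e3: "chg (Sh (A,B)) = int (card (Suc ` A)) - int (card ((\<lambda>j. j - 1) ` B0))"
      by (simp add: Sh chg_def)
    have f2: "int (wt (\<lambda>j. 4*j+1) ((\<lambda>j. j - 1) ` B0)) + 4 * int (card B0) = int (wt (\<lambda>j. 4*j+1) B0)"
      using arg_cong[where f=int, OF wt1_pred[OF B0]] by simp
    have f3: "int (card ((\<lambda>j. j - 1) ` B0)) = int (card B0)" using card_pred[OF B0(1)] by simp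
    have f4: "int (card B) = int (card B0) + 1" using cB by simp
    have f5: "int (wt (\<lambda>j. 4*j+1) B) = int (wt (\<lambda>j. 4*j+1) B0) + 1" using wB by simp
    have f6: "int (card (Suc ` A)) = int (card A)" using cA by simp
    show ?thesis using e1 e2 e3 e4 f1 f2 f3 f4 f5 f6 by linarith
  next
    case False
    have Sh: "Sh (A,B) = (insert 0 (Suc ` A), (\<lambda>j. j - 1) ` B)" using False by (simp add: Sh_def)
    have cA': "card (insert 0 (Suc ` A)) = card A + 1" using assms cA by simp
    have wA: "wt (\<lambda>i. 4*i+3) (insert 0 (Suc ` A)) = 3 + wt (\<lambda>i. 4*i+3) (Suc ` A)"
      using assms by (simp add: wt_def)
    have e1: "int (wAB (Sh (A,B))) = int (wt (\<lambda>i. 4*i+3) (insert 0 (Suc ` A))) + int (wt (\<lambda>j. 4*j+1) ((\<lambda>j. j - 1) ` B))"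
      by (simp add: Sh wAB_def)
    have e3: "chg (Sh (A,B)) = int (card (insert 0 (Suc ` A))) - int (card ((\<lambda>j. j - 1) ` B))"
      by (simp add: Sh chg_def)
    have f2: "int (wt (\<lambda>j. 4*j+1) ((\<lambda>j. j - 1) ` B)) + 4 * int (card B) = int (wt (\<lambda>j. 4*j+1) B)"
      using arg_cong[where f=int, OF wt1_pred[OF False assms(2)]] by simp
    have f3: "int (card ((\<lambda>j. j - 1) ` B)) = int (card B)" using card_pred[OF False] by simp
    have f4: "int (card (insert 0 (Suc ` A))) = int (card A) + 1" using cA' by simp
    have f5: "int (wt (\<lambda>i. 4*i+3) (insert 0 (Suc ` A))) = 3 + int (wt (\<lambda>i. 4*i+3) (Suc ` A))" using wA by simp
    show ?thesis using e1 e2 e3 e4 f1 f2 f3 f4 f5 by linarith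
  qed
qed

lemma cnt_step: "cnt m s = cnt (m+1) (s + 4*m + 3)"
proof -
  have "bij_betw Sh {x \<in> FS \<times> FS. chg x = m \<and> int (wAB x) = s}
     {x \<in> FS \<times> FS. chg x = m + 1 \<and> int (wAB x) = s + 4*m + 3}"
  proof (rule bij_betw_byWitness[where f'=Sh'])
    show "\<forall>a\<in>{x \<in> FS \<times> FS. chg x = m \<and> int (wAB x) = s}. Sh' (Sh a) = a" by (simp add: Sh_inv1)
    show "\<forall>a\<in>{x \<in> FS \<times> FS. chg x = m + 1 \<and> int (wAB x) = s + 4*m + 3}. Sh (Sh' a) = a" by (simp add: Sh_inv2)
    show "Sh ` {x \<in> FS \<times> FS. chg x = m \<and> int (wAB x) = s}
        \<subseteq> {x \<in> FS \<times> FS. chg x = m + 1 \<and> int (wAB x) = s + 4*m + 3}"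
    proof (rule image_subsetI)
      fix z assume z: "z \<in> {x \<in> FS \<times> FS. chg x = m \<and> int (wAB x) = s}"
      obtain A B where zAB: "z = (A,B)" by (cases z)
      have a: "(A,B) \<in> FS \<times> FS" "chg (A,B) = m" "int (wAB (A,B)) = s" using z zAB by auto
      have fin: "finite A" "finite B" using a(1) by (auto simp: FS_def)
      have h: "chg (Sh (A,B)) = m + 1" "int (wAB (Sh (A,B))) = s + 4*m + 3"
        using Sh_chg_w[OF fin] a(2,3) by auto
      show "Sh z \<in> {x \<in> FS \<times> FS. chg x = m + 1 \<and> int (wAB x) = s + 4*m + 3}"
        unfolding zAB using h Sh_FS[OF a(1)] by simp
    qed
    show "Sh' ` {x \<in> FS \<times> FS. chg x = m + 1 \<and> int (wAB x) = s + 4*m + 3}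
        \<subseteq> {x \<in> FS \<times> FS. chg x = m \<and> int (wAB x) = s}"
    proof (rule image_subsetI)
      fix z assume z: "z \<in> {x \<in> FS \<times> FS. chg x = m + 1 \<and> int (wAB x) = s + 4*m + 3}"
      obtain A B where zAB: "z = (A,B)" by (cases z)
      have y: "(A,B) \<in> FS \<times> FS" "chg (A,B) = m + 1" "int (wAB (A,B)) = s + 4*m + 3" using z zAB by auto
      obtain A' B' where x: "Sh' (A,B) = (A',B')" by (cases "Sh' (A,B)")
      have xin: "(A',B') \<in> FS \<times> FS" using Sh'_FS[OF y(1)] x by simp
      have "Sh (A',B') = (A,B)" using Sh_inv2[of "(A,B)"] x by simp
      moreover have "finite A'" "finite B'" using xin by (auto simp: FS_def)
      ultimately have "chg (A,B) = chg (A',B') + 1 \<and> int (wAB (A,B)) = int (wAB (A',B')) + 4 * chg (A',B') + 3"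
        using Sh_chg_w[of A' B'] by simp
      then have "chg (A',B') = m" "int (wAB (A',B')) = s" using y(2,3) by linarith+
      then show "Sh' z \<in> {x \<in> FS \<times> FS. chg x = m \<and> int (wAB x) = s}"
        unfolding zAB x using xin by blast
    qed
  qed
  then have "card {x \<in> FS \<times> FS. chg x = m \<and> int (wAB x) = s} =
     card {x \<in> FS \<times> FS. chg x = m + 1 \<and> int (wAB x) = s + 4*m + 3}" by (rule bij_betw_same_card)
  then show ?thesis unfolding cnt_def .
qed

lemma cnt_closed: "cnt m s = cnt 0 (s - (2*m^2 + m))"
proof (induction m arbitrary: s rule: int_induct[where k=0])
  case base
  then show ?case by simp
next
  case (step1 i)
  have "cnt (i+1) s = cnt i (s - 4*i - 3)" using cnt_step[of i "s - 4*i - 3"] by simp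
  also have "\<dots> = cnt 0 (s - 4*i - 3 - (2*i^2 + i))" by (rule step1.IH)
  also have "s - 4*i - 3 - (2*i^2 + i) = s - (2*(i+1)^2 + (i+1))" by (simp add: power2_eq_square algebra_simps)
  finally show ?case .
next
  case (step2 i)
  have "cnt (i-1) s = cnt i (s + 4*(i-1) + 3)" using cnt_step[of "i-1" s] by simp
  also have "\<dots> = cnt 0 (s + 4*(i-1) + 3 - (2*i^2 + i))" by (rule step2.IH)
  also have "s + 4*(i-1) + 3 - (2*i^2 + i) = s - (2*(i-1)^2 + (i-1))" by (simp add: power2_eq_square algebra_simps)
  finally show ?case .
qed



definition Ag :: "bit fps" where "Ag = Dg (\<lambda>i. 4*i+3)"
definition Bg :: "bit fps" where "Bg = Dg (\<lambda>i. 4*i+1)"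

lemma wAB_fun: "wAB = (\<lambda>(x,y). wt (\<lambda>i. 4*i+3) x + wt (\<lambda>j. 4*j+1) y)"
  by (auto simp: wAB_def fun_eq_iff)

lemma wAB'_fun: "wAB' = (\<lambda>(x,y). wt (\<lambda>i. 4*i+2) x + wt (\<lambda>j. 4*j+2) y)"
  by (auto simp: wAB'_def fun_eq_iff)

lemma fin3: "finfib FS (wt (\<lambda>i. 4*i+3))" by (rule finfib_wt) simp
lemma fin1: "finfib FS (wt (\<lambda>i. 4*i+1))" by (rule finfib_wt) simp
lemma fin2: "finfib FS (wt (\<lambda>i. 4*i+2))" by (rule finfib_wt) simp

lemma AB_gf: "Ag * Bg = gf (FS \<times> FS) wAB"
  unfolding Ag_def Bg_def Dg_def wAB_fun by (rule gf_mult[OF fin3 fin1])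

lemma M_gf: "Dg (\<lambda>i. 4*i+2) * Dg (\<lambda>i. 4*i+2) = gf (FS \<times> FS) wAB'"
  unfolding Dg_def wAB'_fun by (rule gf_mult[OF fin2 fin2])

lemma finAB: "finfib (FS \<times> FS) wAB"
  unfolding wAB_fun by (rule finfib_prod[OF fin3 fin1])

lemma finAB': "finfib (FS \<times> FS) wAB'"
  unfolding wAB'_fun by (rule finfib_prod[OF fin2 fin2])

lemma card_le_wt: "(\<And>i. 1 \<le> \<phi> i) \<Longrightarrow> card A \<le> wt \<phi> A"
proof (cases "finite A")
  case True
  assume "\<And>i. 1 \<le> \<phi> i"
  then have "(\<Sum>i\<in>A. (1::nat)) \<le> (\<Sum>i\<in>A. \<phi> i)" by (intro sum_mono) auto
  then show ?thesis by (simp add: wt_def)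
qed simp

lemma chg_bound: "x \<in> FS \<times> FS \<Longrightarrow> \<bar>chg x\<bar> \<le> int (wAB' x)"
proof -
  assume "x \<in> FS \<times> FS"
  obtain A B where x: "x = (A,B)" by (cases x)
  have "card A \<le> wt (\<lambda>i. 4*i+2) A" "card B \<le> wt (\<lambda>i. 4*i+2) B" by (rule card_le_wt, simp)+
  then show ?thesis by (simp add: x chg_def wAB'_def)
qed

lemma wt_card: "wt (\<lambda>i. f i + c) A = wt f A + c * card A"
  by (simp add: wt_def sum.distrib mult.commute)

lemma wAB'_eq: "int (wAB' x) = int (wAB x) - chg x"
proof -
  obtain A B where x: "x = (A,B)" by (cases x)
  have e: "(\<lambda>i::nat. 4*i+3) = (\<lambda>i. 4*i+2+1)" by auto
  have n1: "wt (\<lambda>i. 4*i+3) A = wt (\<lambda>i. 4*i+2) A + 1 * card A" unfolding e by (rule wt_card)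
  have e': "(\<lambda>i::nat. 4*i+2) = (\<lambda>i. 4*i+1+1)" by auto
  have n2: "wt (\<lambda>i. 4*i+2) B = wt (\<lambda>i. 4*i+1) B + 1 * card B" unfolding e' by (rule wt_card)
  have f1: "int (wt (\<lambda>i. 4*i+3) A) = int (wt (\<lambda>i. 4*i+2) A) + int (card A)" using n1 by simp
  have f2: "int (wt (\<lambda>i. 4*i+2) B) = int (wt (\<lambda>i. 4*i+1) B) + int (card B)" using n2 by simp
  have e1: "int (wAB' x) = int (wt (\<lambda>i. 4*i+2) A) + int (wt (\<lambda>i. 4*i+2) B)" by (simp add: x wAB'_def)
  have e2: "int (wAB x) = int (wt (\<lambda>i. 4*i+3) A) + int (wt (\<lambda>i. 4*i+1) B)" by (simp add: x wAB_def)
  have e3: "chg x = int (card A) - int (card B)" by (simp add: x chg_def)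
  show ?thesis using f1 f2 e1 e2 e3 by linarith
qed

lemma chg_bound2: "x \<in> FS \<times> FS \<Longrightarrow> \<bar>chg x\<bar> \<le> int (wAB x)"
proof -
  assume a: "x \<in> FS \<times> FS"
  obtain A B where x: "x = (A,B)" by (cases x)
  have "card A \<le> wt (\<lambda>i. 4*i+3) A" "card B \<le> wt (\<lambda>i. 4*i+1) B" by (rule card_le_wt, simp)+
  then show ?thesis by (simp add: x chg_def wAB_def)
qed

lemma card_split:
  assumes "finite {x\<in>X. Q x}" "finite I" "\<And>x. x \<in> X \<Longrightarrow> Q x \<Longrightarrow> f x \<in> I"
  shows "card {x\<in>X. Q x} = (\<Sum>m\<in>I. card {x\<in>X. f x = m \<and> Q x})"
proof -
  have e: "{x\<in>X. Q x} = (\<Union>m\<in>I. {x\<in>X. f x = m \<and> Q x})" using assms(3) by auto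
  show ?thesis unfolding e
    by (rule card_UN_disjoint) (use assms(1,2) in \<open>auto intro: finite_subset[OF _ assms(1)]\<close>)
qed

lemma tri_nonneg: "0 \<le> 2*m^2 + (m::int)"
proof (cases "m \<ge> 0")
  case True then show ?thesis by simp
next
  case False
  then have "m * (2*m+1) \<ge> 0" by (intro mult_nonpos_nonpos) auto
  then show ?thesis by (simp add: power2_eq_square algebra_simps)
qed

lemma cnt_neg: "s < 0 \<Longrightarrow> cnt m s = 0"
  unfolding cnt_def by (rule iffD2[OF card_0_eq]) auto

definition C0 :: "bit fps" where "C0 = gf {x\<in>FS \<times> FS. chg x = 0} wAB"

lemma C0_nth: "C0 $ t = of_nat (cnt 0 (int t))"
proof -
  have "{x\<in>{x\<in>FS \<times> FS. chg x = 0}. wAB x = t} = {x \<in> FS \<times> FS. chg x = 0 \<and> int (wAB x) = int t}" by auto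
  then show ?thesis by (simp add: C0_def gf_nth cnt_def)
qed

lemma AB_nth:
  assumes "int n \<le> K"
  shows "(Ag*Bg) $ n = (\<Sum>m\<in>{-K..K}. of_nat (cnt 0 (int n - (2*m^2+m))))"
proof -
  have fin: "finite {x\<in>FS \<times> FS. wAB x = n}" using finAB by (simp add: finfib_def)
  have "card {x\<in>FS \<times> FS. wAB x = n} = (\<Sum>m\<in>{-K..K}. card {x\<in>FS \<times> FS. chg x = m \<and> wAB x = n})"
  proof (rule card_split[OF fin])
    fix x assume "x \<in> FS \<times> FS" "wAB x = n"
    then show "chg x \<in> {-K..K}" using chg_bound2[of x] assms by auto
  qed simp
  also have "\<dots> = (\<Sum>m\<in>{-K..K}. cnt 0 (int n - (2*m^2+m)))"
  proof (rule sum.cong)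
    fix m assume "m \<in> {-K..K}"
    have "{x\<in>FS \<times> FS. chg x = m \<and> wAB x = n} = {x\<in>FS \<times> FS. chg x = m \<and> int (wAB x) = int n}" by auto
    then show "card {x\<in>FS \<times> FS. chg x = m \<and> wAB x = n} = cnt 0 (int n - (2*m^2+m))"
      using cnt_closed[of m "int n"] by (simp add: cnt_def)
  qed simp
  finally show ?thesis by (simp add: AB_gf gf_nth)
qed

definition Th :: "int \<Rightarrow> bit fps" where
  "Th K = (\<Sum>m\<in>{-K..K}. fps_X ^ nat (2*m^2+m))"

lemma ThC0_nth:
  "(Th K * C0) $ n = (\<Sum>m\<in>{-K..K}. of_nat (cnt 0 (int n - (2*m^2+m))))"
proof -
  have "(Th K * C0) $ n = (\<Sum>m\<in>{-K..K}. (fps_X ^ nat (2*m^2+m) * C0) $ n)"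
    by (simp add: Th_def sum_distrib_right fps_sum_nth)
  also have "\<dots> = (\<Sum>m\<in>{-K..K}. of_nat (cnt 0 (int n - (2*m^2+m))))"
  proof (rule sum.cong)
    fix m :: int
    have nn: "0 \<le> 2*m^2+m" by (rule tri_nonneg)
    show "(fps_X ^ nat (2*m^2+m) * C0) $ n = of_nat (cnt 0 (int n - (2*m^2+m)))"
    proof (cases "n < nat (2*m^2+m)")
      case True
      then have "int n - (2*m^2+m) < 0" using nn by linarith
      then show ?thesis using True by (simp add: fps_X_power_mult_nth cnt_neg)
    next
      case False
      define k where "k = nat (2*m^2+m)"
      have "(fps_X ^ k * C0) $ n = C0 $ (n - k)" using False by (simp add: fps_X_power_mult_nth k_def)
      also have "\<dots> = of_nat (cnt 0 (int (n - k)))" by (rule C0_nth)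
      also have "int (n - k) = int n - (2*m^2+m)" using nn False by (simp add: k_def)
      finally show ?thesis by (simp add: k_def)
    qed
  qed simp
  finally show ?thesis .
qed

lemma Th_nth: "Th K $ u \<noteq> 0 \<Longrightarrow> \<exists>m::int. 2*m^2+m = int u"
proof -
  assume a: "Th K $ u \<noteq> 0"
  have "Th K $ u = (\<Sum>m\<in>{-K..K}. (if u = nat (2*m^2+m) then 1 else 0))"
    by (simp add: Th_def fps_sum_nth)
  have "\<exists>m\<in>{-K..K}. u = nat (2*m^2+m)"
  proof (rule ccontr)
    assume "\<not> (\<exists>m\<in>{-K..K}. u = nat (2*m^2+m))"
    then have "(\<Sum>m\<in>{-K..K}. (if u = nat (2*m^2+m) then 1 else 0)) = (0::bit)"
      by (intro sum.neutral) auto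
    with a \<open>Th K $ u = _\<close> show False by simp
  qed
  then obtain m where "u = nat (2*m^2+m)" by blast
  then have "int u = 2*m^2+m" using tri_nonneg[of m] by simp
  then show ?thesis by metis
qed

lemma C0_eq: "C0 = dil 4 Og"
proof (rule fps_ext)
  fix v
  have M: "gf (FS \<times> FS) wAB' = dil 4 Og"
  proof -
    have d: "Dg (\<lambda>i. 4*i+2) = dil 2 Og"
    proof -
      have "(\<lambda>i::nat. 4*i+2) = (\<lambda>i. 2*(2*i+1))" by auto
      then show ?thesis unfolding Og_def using Dg_scale[of 2 "\<lambda>i. 2*i+1"] by simp
    qed
    have "gf (FS \<times> FS) wAB' = dil 2 Og * dil 2 Og" using M_gf d by simp
    also have "\<dots> = dil 4 Og" by (simp add: frob dil_dil)
    finally show ?thesis .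
  qed
  define K where "K = int v"
  have fin: "finite {x\<in>FS \<times> FS. wAB' x = v}" using finAB' by (simp add: finfib_def)
  have "card {x\<in>FS \<times> FS. wAB' x = v} = (\<Sum>m\<in>{-K..K}. card {x\<in>FS \<times> FS. chg x = m \<and> wAB' x = v})"
  proof (rule card_split[OF fin])
    fix x assume "x \<in> FS \<times> FS" "wAB' x = v"
    then show "chg x \<in> {-K..K}" using chg_bound[of x] by (auto simp: K_def)
  qed simp
  also have "\<dots> = (\<Sum>m\<in>{-K..K}. cnt 0 (int v - 2*m^2))"
  proof (rule sum.cong)
    fix m assume "m \<in> {-K..K}"
    have "{x\<in>FS \<times> FS. chg x = m \<and> wAB' x = v} = {x\<in>FS \<times> FS. chg x = m \<and> int (wAB x) = int v + m}"
    proof (rule Collect_cong)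
      fix x
      have h: "int (wAB' x) = int (wAB x) - chg x" by (rule wAB'_eq)
      have "wAB' x = v \<longleftrightarrow> int (wAB x) = int v + chg x"
      proof
        assume "wAB' x = v" then show "int (wAB x) = int v + chg x" using h by linarith
      next
        assume "int (wAB x) = int v + chg x" then have "int (wAB' x) = int v" using h by linarith
        then show "wAB' x = v" by simp
      qed
      then show "(x \<in> FS \<times> FS \<and> chg x = m \<and> wAB' x = v) = (x \<in> FS \<times> FS \<and> chg x = m \<and> int (wAB x) = int v + m)"
        by auto
    qed
    then show "card {x\<in>FS \<times> FS. chg x = m \<and> wAB' x = v} = cnt 0 (int v - 2*m^2)"
      using cnt_closed[of m "int v + m"] by (simp add: cnt_def)
  qed simp
  finally have "dil 4 Og $ v = (\<Sum>m\<in>{-K..K}. of_nat (cnt 0 (int v - 2*m^2)))"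
    by (simp add: M[symmetric] gf_nth)
  also have "\<dots> = (\<Sum>m\<in>{m\<in>{-K..K}. - m = m}. (of_nat (cnt 0 (int v - 2*m^2)) :: bit))"
    by (rule sum_invol_bit) auto
  also have "{m\<in>{-K..K}. - m = m} = {0}" by (auto simp: K_def)
  finally show "C0 $ v = dil 4 Og $ v" by (simp add: C0_nth)
qed

lemma C0U: "C0 * dil 4 D1 = 1"
  by (simp add: C0_eq dil_mult[symmetric] H_one)

lemma Gg_AB: "Gg = Ag * Bg * dil 4 D1"
  by (simp add: Gg_eq Og_split Ag_def Bg_def mult.commute)

lemma Gg_nth: "Gg $ u \<noteq> 0 \<Longrightarrow> \<exists>m::int. 2*m^2+m = int u"
proof -
  assume a: "Gg $ u \<noteq> 0"
  define K where "K = int u"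
  have "Gg $ u = (\<Sum>i=0..u. (Ag*Bg) $ i * dil 4 D1 $ (u - i))"
    by (simp add: Gg_AB fps_mult_nth)
  also have "\<dots> = (\<Sum>i=0..u. (Th K * C0) $ i * dil 4 D1 $ (u - i))"
    by (rule sum.cong) (auto simp: AB_nth ThC0_nth K_def)
  also have "\<dots> = (Th K * C0 * dil 4 D1) $ u" by (simp add: fps_mult_nth)
  also have "\<dots> = Th K $ u" by (simp add: mult.assoc C0U)
  finally show ?thesis using a Th_nth by metis
qed

lemma finfib_scale: "finfib P w \<Longrightarrow> k > 0 \<Longrightarrow> finfib P (\<lambda>x. k * w x)"
  unfolding finfib_def
proof
  fix n assume a: "\<forall>n. finite {x \<in> P. w x = n}" "k > 0"
  have "{x \<in> P. k * w x = n} \<subseteq> {x \<in> P. w x = n div k}" using a(2) by auto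
  then show "finite {x \<in> P. k * w x = n}" using a(1) by (meson finite_subset)
qed

theorem key:
  assumes "odd (card {z \<in> FS \<times> FS. (case z of (S,T) \<Rightarrow> wt Suc S + 2 * wt Suc T) = u})"
  shows "\<exists>m::int. 2*m^2+m = int u"
proof (rule Gg_nth)
  have f: "finfib FS (wt Suc)" by (rule finfib_wt) simp
  have "Gg = gf FS (wt Suc) * gf FS (\<lambda>S. 2 * wt Suc S)"
    unfolding Gg_def D1_def Dg_def by (simp add: gf_scale)
  also have "\<dots> = gf (FS \<times> FS) (\<lambda>(S,T). wt Suc S + 2 * wt Suc T)"
    by (rule gf_mult[OF f finfib_scale[OF f]]) simp
  finally have G: "Gg = gf (FS \<times> FS) (\<lambda>(S,T). wt Suc S + 2 * wt Suc T)" .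
  have "Gg $ u = of_nat (card {z \<in> FS \<times> FS. (case z of (S,T) \<Rightarrow> wt Suc S + 2 * wt Suc T) = u})"
    unfolding G gf_nth by (rule refl)
  then show "Gg $ u \<noteq> 0" using assms bit_of_nat_eq0 by simp
qed



definition enc :: "nat set \<Rightarrow> nat set \<Rightarrow> nat \<Rightarrow> nat" where
  "enc S T i = (if i \<in> S then 1 else 0) + (if i \<in> T then 2 else 0)"

lemma enc_lt: "enc S T i < 4" by (simp add: enc_def)

lemma enc_bits: "odd (enc S T i) \<longleftrightarrow> i \<in> S" "2 \<le> enc S T i \<longleftrightarrow> i \<in> T"
  by (auto simp: enc_def)

lemma bits_rec: "(j::nat) < 4 \<Longrightarrow> (if odd j then 1 else 0) + (if 2 \<le> j then 2 else 0) = j"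
  by (cases j; cases "j - 1"; cases "j - 2"; cases "j - 3") auto

lemma sum_shift1: "(\<Sum>i=1..N. g i) = (\<Sum>i<N. g (Suc i))"
  by (induction N) auto

lemma enc_sum:
  assumes "S \<subseteq> {..<N}" "T \<subseteq> {..<N}"
  shows "(\<Sum>i=1..N. i * enc S T (i - 1)) = wt Suc S + 2 * wt Suc T"
proof -
  have "(\<Sum>i=1..N. i * enc S T (i - 1)) = (\<Sum>i<N. Suc i * enc S T i)"
    using sum_shift1[of "\<lambda>i. i * enc S T (i - 1)" N] by simp
  also have "\<dots> = (\<Sum>i<N. (if i \<in> S then Suc i else 0) + 2 * (if i \<in> T then Suc i else 0))"
    by (rule sum.cong) (auto simp: enc_def)
  also have "\<dots> = (\<Sum>i<N. (if i \<in> S then Suc i else 0)) + 2 * (\<Sum>i<N. (if i \<in> T then Suc i else 0))"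
    by (simp add: sum.distrib sum_distrib_left)
  also have "(\<Sum>i<N. (if i \<in> S then Suc i else 0)) = wt Suc S"
  proof -
    have "{..<N} \<inter> S = S" using assms(1) by auto
    then show ?thesis using sum.inter_restrict[of "{..<N}" Suc S] by (simp add: wt_def)
  qed
  also have "(\<Sum>i<N. (if i \<in> T then Suc i else 0)) = wt Suc T"
  proof -
    have "{..<N} \<inter> T = T" using assms(2) by auto
    then show ?thesis using sum.inter_restrict[of "{..<N}" Suc T] by (simp add: wt_def)
  qed
  finally show ?thesis .
qed

context
  fixes p r a m :: nat
  assumes pp: "prime p" and p5: "p \<ge> 5" and apos: "a > 0" and cop: "coprime a p" and m1: "m \<ge> 1"
begin

abbreviation AA where "AA \<equiv> p * r + a"

lemma AA_pos: "AA \<ge> 1" using apos by simp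

lemma dec_uniq:
  assumes "j1 < 4" "j2 < 4" "j1 * AA + p*k1 = j2 * AA + p*k2"
  shows "j1 = j2 \<and> k1 = k2"
proof -
  define d where "d = int j1 - int j2"
  have e: "int j1 * (int p * int r + int a) + int p * int k1 = int j2 * (int p * int r + int a) + int p * int k2"
    using arg_cong[where f=int, OF assms(3)] by simp
  have "d * int a = int p * (int k2 - int k1 - d * int r)"
    using e unfolding d_def by (simp add: algebra_simps)
  then have "int p dvd d * int a" by (metis dvd_triv_left)
  moreover have "coprime (int p) (int a)" using cop by (simp add: coprime_commute)
  ultimately have dv: "int p dvd d" by (simp add: coprime_dvd_mult_left_iff)
  have lt: "\<bar>d\<bar> < int p" using assms(1,2) p5 unfolding d_def by auto
  have "d = 0"
  proof (rule ccontr)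
    assume "d \<noteq> 0"
    then have "\<bar>int p\<bar> \<le> \<bar>d\<bar>" using dv by (rule dvd_imp_le_int)
    then show False using lt by simp
  qed
  then have j: "j1 = j2" by (simp add: d_def)
  moreover have "p > 0" using p5 by simp
  ultimately show ?thesis using assms(3) by simp
qed

definition jj :: "nat \<Rightarrow> nat" where "jj c = (SOME j. j < 4 \<and> (\<exists>k<m. c = j * AA + p * k))"
definition kk :: "nat \<Rightarrow> nat" where "kk c = (SOME k. k < m \<and> c = jj c * AA + p * k)"

lemma dec:
  assumes "allowed_mult p r a m c"
  shows "jj c < 4 \<and> kk c < m \<and> c = jj c * AA + p * kk c"
proof -
  have "\<exists>j. j < 4 \<and> (\<exists>k<m. c = j * AA + p * k)" using assms by (auto simp: allowed_mult_def)
  then have 1: "jj c < 4 \<and> (\<exists>k<m. c = jj c * AA + p * k)" unfolding jj_def by (rule someI_ex)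
  then have "\<exists>k. k < m \<and> c = jj c * AA + p * k" by blast
  then have "kk c < m \<and> c = jj c * AA + p * kk c" unfolding kk_def by (rule someI_ex)
  with 1 show ?thesis by blast
qed

lemma allowed_I: "j < 4 \<Longrightarrow> k < m \<Longrightarrow> allowed_mult p r a m (j * AA + p * k)"
  by (auto simp: allowed_mult_def)

lemma dec_inv:
  assumes "j < 4" "k < m"
  shows "jj (j * AA + p * k) = j \<and> kk (j * AA + p * k) = k"
proof -
  have "jj (j * AA + p * k) < 4 \<and> kk (j * AA + p * k) < m \<and>
     j * AA + p * k = jj (j * AA + p * k) * AA + p * kk (j * AA + p * k)"
    by (rule dec[OF allowed_I[OF assms]])
  then show ?thesis using dec_uniq[of j "jj (j * AA + p * k)" k "kk (j * AA + p * k)"] assms by auto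
qed

lemma jj0: "jj 0 = 0" "kk 0 = 0"
  using dec_inv[of 0 0] m1 by auto

definition Fset :: "nat \<Rightarrow> (nat \<Rightarrow> nat) set" where
  "Fset N = {f :: nat \<Rightarrow> nat.
      (\<forall>i. f i \<noteq> 0 \<longrightarrow> 1 \<le> i \<and> i \<le> N) \<and>
      (\<Sum>i=1..N. i * f i) = N \<and>
      (\<forall>i\<in>{1..N}. allowed_mult p r a m (f i))}"

lemma b4_Fset: "b4 p r a m N = card (Fset N)"
  by (simp add: b4_def Fset_def)

definition gs :: "nat \<Rightarrow> (nat \<Rightarrow> nat) \<Rightarrow> nat" where
  "gs N f = (\<Sum>i=1..N. i * jj (f i))"

definition Hset :: "nat \<Rightarrow> nat \<Rightarrow> (nat \<Rightarrow> nat) set" where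
  "Hset N u = {h. (\<forall>i. h i \<noteq> 0 \<longrightarrow> 1 \<le> i \<and> i \<le> N) \<and> (\<forall>i. h i < m) \<and> AA * u + p * (\<Sum>i=1..N. i * h i) = N}"

definition Pairs :: "nat \<Rightarrow> (nat set \<times> nat set) set" where
  "Pairs u = {z \<in> FS \<times> FS. (case z of (S,T) \<Rightarrow> wt Suc S + 2 * wt Suc T) = u}"

lemma sum_dec:
  assumes "f \<in> Fset N"
  shows "(\<Sum>i=1..N. i * f i) = AA * gs N f + p * (\<Sum>i=1..N. i * kk (f i))"
proof -
  have "(\<Sum>i=1..N. i * f i) = (\<Sum>i=1..N. AA * (i * jj (f i)) + p * (i * kk (f i)))"
  proof (rule sum.cong)
    fix i assume "i \<in> {1..N}"
    then have "f i = jj (f i) * AA + p * kk (f i)" using dec assms by (auto simp: Fset_def)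
    then show "i * f i = AA * (i * jj (f i)) + p * (i * kk (f i))"
      by (metis (no_types, lifting) add_mult_distrib2 mult.commute mult.left_commute)
  qed simp
  also have "\<dots> = AA * gs N f + p * (\<Sum>i=1..N. i * kk (f i))"
    by (simp add: sum.distrib sum_distrib_left gs_def)
  finally show ?thesis .
qed

definition Psi :: "nat \<Rightarrow> (nat set \<times> nat set) \<times> (nat \<Rightarrow> nat) \<Rightarrow> (nat \<Rightarrow> nat)" where
  "Psi N z = (case z of ((S,T),h) \<Rightarrow> (\<lambda>i. if 1 \<le> i \<and> i \<le> N then enc S T (i - 1) * AA + p * h i else 0))"

definition Phi :: "nat \<Rightarrow> (nat \<Rightarrow> nat) \<Rightarrow> (nat set \<times> nat set) \<times> (nat \<Rightarrow> nat)" where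
  "Phi N f = (({i. i < N \<and> odd (jj (f (Suc i)))}, {i. i < N \<and> 2 \<le> jj (f (Suc i))}), (\<lambda>i. kk (f i)))"

lemma enc_phi:
  assumes "f \<in> Fset N" "1 \<le> i" "i \<le> N"
  shows "enc {i. i < N \<and> odd (jj (f (Suc i)))} {i. i < N \<and> 2 \<le> jj (f (Suc i))} (i - 1) = jj (f i)"
proof -
  have i: "Suc (i - 1) = i" "i - 1 < N" using assms by auto
  have "jj (f i) < 4" using dec assms by (auto simp: Fset_def)
  then show ?thesis using bits_rec[of "jj (f i)"] i by (simp add: enc_def)
qed

lemma pairs_sub:
  assumes "(S,T) \<in> Pairs u" "u \<le> N"
  shows "S \<subseteq> {..<N}" "T \<subseteq> {..<N}"
proof -
  have fin: "finite S" "finite T" and w: "wt Suc S + 2 * wt Suc T = u" using assms by (auto simp: Pairs_def FS_def)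
  show "S \<subseteq> {..<N}"
  proof
    fix i assume "i \<in> S"
    then have "Suc i \<le> wt Suc S" using wt_ge[OF fin(1)] by blast
    then show "i \<in> {..<N}" using w assms(2) by auto
  qed
  show "T \<subseteq> {..<N}"
  proof
    fix i assume "i \<in> T"
    then have "Suc i \<le> wt Suc T" using wt_ge[OF fin(2)] by blast
    then show "i \<in> {..<N}" using w assms(2) by auto
  qed
qed

lemma H_le: "h \<in> Hset N u \<Longrightarrow> u \<le> N"
proof -
  assume "h \<in> Hset N u"
  then have "AA * u + p * (\<Sum>i=1..N. i * h i) = N" by (simp add: Hset_def)
  moreover have "u \<le> AA * u" using AA_pos by simp
  ultimately show "u \<le> N" by linarith
qed

lemma Fset_bij: "bij_betw (Psi N) (Pairs u \<times> Hset N u) {f \<in> Fset N. gs N f = u}"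
proof (rule bij_betw_byWitness[where f'="Phi N"])
  show "\<forall>z\<in>Pairs u \<times> Hset N u. Phi N (Psi N z) = z"
  proof
    fix z assume z: "z \<in> Pairs u \<times> Hset N u"
    obtain S T h where zz: "z = ((S,T),h)" by (metis prod.collapse)
    have P: "(S,T) \<in> Pairs u" and H: "h \<in> Hset N u" using z zz by auto
    have uN: "u \<le> N" using H_le[OF H] .
    have sub: "S \<subseteq> {..<N}" "T \<subseteq> {..<N}" using pairs_sub[OF P uN] by auto
    have hm: "\<And>i. h i < m" and hs: "\<And>i. h i \<noteq> 0 \<Longrightarrow> 1 \<le> i \<and> i \<le> N" using H by (auto simp: Hset_def)
    define f where "f = Psi N z"
    have fS: "jj (f (Suc i)) = enc S T i" if "i < N" for i
      using that dec_inv[OF enc_lt hm] by (simp add: f_def Psi_def zz)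
    have e1: "{i. i < N \<and> odd (jj (f (Suc i)))} = S"
      unfolding set_eq_iff
    proof
      fix i show "i \<in> {i. i < N \<and> odd (jj (f (Suc i)))} \<longleftrightarrow> i \<in> S"
      proof (cases "i < N")
        case True then show ?thesis using fS[OF True] enc_bits(1)[of S T i] by simp
      next
        case False then show ?thesis using sub by auto
      qed
    qed
    have e2: "{i. i < N \<and> 2 \<le> jj (f (Suc i))} = T"
      unfolding set_eq_iff
    proof
      fix i show "i \<in> {i. i < N \<and> 2 \<le> jj (f (Suc i))} \<longleftrightarrow> i \<in> T"
      proof (cases "i < N")
        case True then show ?thesis using fS[OF True] enc_bits(2)[of S T i] by simp
      next
        case False then show ?thesis using sub by auto
      qed
    qed
    have e3: "(\<lambda>i. kk (f i)) = h"
    proof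
      fix i show "kk (f i) = h i"
      proof (cases "1 \<le> i \<and> i \<le> N")
        case True then show ?thesis using dec_inv[OF enc_lt hm] by (simp add: f_def Psi_def zz)
      next
        case False then show ?thesis using hs[of i] jj0 by (auto simp: f_def Psi_def zz)
      qed
    qed
    have "Phi N f = ((S,T),h)" unfolding Phi_def e1 e2 e3 by (rule refl)
    then show "Phi N (Psi N z) = z" using zz by (simp add: f_def)
  qed
  show "\<forall>f\<in>{f \<in> Fset N. gs N f = u}. Psi N (Phi N f) = f"
  proof
    fix f assume f: "f \<in> {f \<in> Fset N. gs N f = u}"
    then have fF: "f \<in> Fset N" by simp
    show "Psi N (Phi N f) = f"
    proof
      fix i
      show "Psi N (Phi N f) i = f i"
      proof (cases "1 \<le> i \<and> i \<le> N")
        case True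
        then have "f i = jj (f i) * AA + p * kk (f i)" using dec fF by (auto simp: Fset_def)
        then show ?thesis using True enc_phi[OF fF] by (simp add: Psi_def Phi_def)
      next
        case False
        then have "f i = 0" using fF by (auto simp: Fset_def)
        then show ?thesis using False by (auto simp: Psi_def Phi_def)
      qed
    qed
  qed
  show "Psi N ` (Pairs u \<times> Hset N u) \<subseteq> {f \<in> Fset N. gs N f = u}"
  proof
    fix g assume "g \<in> Psi N ` (Pairs u \<times> Hset N u)"
    then obtain S T h where P: "(S,T) \<in> Pairs u" and H: "h \<in> Hset N u" and g: "g = Psi N ((S,T),h)" by auto
    have uN: "u \<le> N" using H_le[OF H] .
    have sub: "S \<subseteq> {..<N}" "T \<subseteq> {..<N}" using pairs_sub[OF P uN] by auto
    have hm: "\<And>i. h i < m" and hsum: "AA * u + p * (\<Sum>i=1..N. i * h i) = N" using H by (auto simp: Hset_def)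
    have w: "wt Suc S + 2 * wt Suc T = u" using P by (simp add: Pairs_def)
    have gi: "g i = enc S T (i - 1) * AA + p * h i" if "i \<in> {1..N}" for i
      using that by (simp add: g Psi_def)
    have supp: "\<forall>i. g i \<noteq> 0 \<longrightarrow> 1 \<le> i \<and> i \<le> N" by (simp add: g Psi_def)
    have allw: "\<forall>i\<in>{1..N}. allowed_mult p r a m (g i)" using gi allowed_I[OF enc_lt hm] by simp
    have "(\<Sum>i=1..N. i * g i) = (\<Sum>i=1..N. AA * (i * enc S T (i - 1)) + p * (i * h i))"
      by (rule sum.cong) (simp_all add: gi algebra_simps)
    also have "\<dots> = AA * (\<Sum>i=1..N. i * enc S T (i - 1)) + p * (\<Sum>i=1..N. i * h i)"
      by (simp add: sum.distrib sum_distrib_left)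
    also have "\<dots> = N" using enc_sum[OF sub] w hsum by simp
    finally have s: "(\<Sum>i=1..N. i * g i) = N" .
    have "gs N g = (\<Sum>i=1..N. i * enc S T (i - 1))"
      unfolding gs_def by (rule sum.cong) (simp_all add: gi dec_inv[OF enc_lt hm])
    also have "\<dots> = u" using enc_sum[OF sub] w by simp
    finally have "gs N g = u" .
    then show "g \<in> {f \<in> Fset N. gs N f = u}" using supp allw s by (simp add: Fset_def)
  qed
  show "Phi N ` {f \<in> Fset N. gs N f = u} \<subseteq> Pairs u \<times> Hset N u"
  proof
    fix z assume "z \<in> Phi N ` {f \<in> Fset N. gs N f = u}"
    then obtain f where fF: "f \<in> Fset N" and gsu: "gs N f = u" and z: "z = Phi N f" by auto
    define S where "S = {i. i < N \<and> odd (jj (f (Suc i)))}"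
    define T where "T = {i. i < N \<and> 2 \<le> jj (f (Suc i))}"
    have sub: "S \<subseteq> {..<N}" "T \<subseteq> {..<N}" by (auto simp: S_def T_def)
    have fin: "finite S" "finite T" using sub finite_subset by auto
    have "wt Suc S + 2 * wt Suc T = (\<Sum>i=1..N. i * enc S T (i - 1))" using enc_sum[OF sub] by simp
    also have "\<dots> = gs N f" unfolding gs_def S_def T_def
    proof (rule sum.cong)
      fix x assume "x \<in> {1..N}"
      then show "x * enc {i. i < N \<and> odd (jj (f (Suc i)))} {i. i < N \<and> 2 \<le> jj (f (Suc i))} (x - 1) = x * jj (f x)"
        using enc_phi[OF fF, of x] by simp
    qed simp
    finally have P: "(S,T) \<in> Pairs u" using fin gsu by (simp add: Pairs_def FS_def)
    have supp: "\<forall>i. f i \<noteq> 0 \<longrightarrow> 1 \<le> i \<and> i \<le> N" and fs: "(\<Sum>i=1..N. i * f i) = N"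
      and allw: "\<forall>i\<in>{1..N}. allowed_mult p r a m (f i)" using fF by (auto simp: Fset_def)
    have h1: "\<forall>i. kk (f i) \<noteq> 0 \<longrightarrow> 1 \<le> i \<and> i \<le> N" using supp jj0 by metis
    have h2: "\<forall>i. kk (f i) < m"
    proof
      fix i show "kk (f i) < m"
      proof (cases "1 \<le> i \<and> i \<le> N")
        case True then show ?thesis using dec allw by auto
      next
        case False then have "f i = 0" using supp by auto
        then show ?thesis using jj0 m1 by simp
      qed
    qed
    have h3: "AA * u + p * (\<Sum>i=1..N. i * kk (f i)) = N" using sum_dec[OF fF] fs gsu by simp
    have "(\<lambda>i. kk (f i)) \<in> Hset N u" using h1 h2 h3 by (simp add: Hset_def)
    then show "z \<in> Pairs u \<times> Hset N u" using P by (simp add: z Phi_def S_def T_def)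
  qed
qed

lemma Fu_card: "card {f \<in> Fset N. gs N f = u} = card (Pairs u) * card (Hset N u)"
  using bij_betw_same_card[OF Fset_bij[of N u]] by (simp add: card_cartesian_product)

lemma gs_le: "f \<in> Fset N \<Longrightarrow> gs N f \<le> N"
proof -
  assume f: "f \<in> Fset N"
  then have "N = AA * gs N f + p * (\<Sum>i=1..N. i * kk (f i))" using sum_dec by (simp add: Fset_def)
  moreover have "gs N f \<le> AA * gs N f" using AA_pos by simp
  ultimately show ?thesis by linarith
qed


lemma final_even:
  fixes t ainv :: int and n :: nat
  assumes cg: "[int a * ainv = 1] (mod int p)" and nq: "\<not> QuadRes (int p) (8*t*ainv+1)"
    and nn: "int p * int n + t \<ge> 0"
  shows "even (b4 p r a m (nat (int p * int n + t)))"
proof -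
  define N where "N = nat (int p * int n + t)"
  have NN: "int N = int p * int n + t" using nn by (simp add: N_def)
  have term_even: "even (card {f \<in> Fset N. gs N f = u})" for u
  proof (cases "{f \<in> Fset N. gs N f = u} = {}")
    case True then show ?thesis by (simp only: card.empty) simp
  next
    case False
    then obtain f where f: "f \<in> Fset N" "gs N f = u" by auto
    define X where "X = (\<Sum>i=1..N. i * kk (f i))"
    have NX: "N = AA * u + p * X" using sum_dec[OF f(1)] f by (simp add: Fset_def X_def)
    have "even (card (Pairs u))"
    proof (rule ccontr)
      assume "odd (card (Pairs u))"
      then obtain M :: int where M: "2*M^2 + M = int u" using key unfolding Pairs_def by blast
      have "int p dvd (int a * ainv - 1)" using cg by (simp add: cong_iff_dvd_diff)
      then obtain q where q: "int a * ainv - 1 = int p * q" by (elim dvdE)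
      have "int N = (int p * int r + int a) * int u + int p * int X"
        using arg_cong[where f=int, OF NX] by simp
      then have t_eq: "t = (int p * int r + int a) * int u + int p * int X - int p * int n"
        using NN by linarith
      have id: "8*t*ainv + 1 - (4*M+1)^2 = int p * (8*(int r * int u * ainv + (int X - int n) * ainv + int u * q))
          + 8*(int u - (2*M^2+M)) + 8 * int u * (int a * ainv - 1 - int p * q)"
        unfolding t_eq by (simp add: algebra_simps power2_eq_square)
      have "8*t*ainv + 1 - (4*M+1)^2 = int p * (8*(int r * int u * ainv + (int X - int n) * ainv + int u * q))"
        using id M q by simp
      then have "int p dvd ((4*M+1)^2 - (8*t*ainv + 1))"
        by (metis dvd_minus_iff dvd_triv_left minus_diff_eq)
      then have "[(4*M+1)^2 = 8*t*ainv+1] (mod int p)" by (simp add: cong_iff_dvd_diff)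
      then have "QuadRes (int p) (8*t*ainv+1)" unfolding QuadRes_def by blast
      with nq show False by simp
    qed
    then show ?thesis by (simp add: Fu_card)
  qed
  show ?thesis
  proof (cases "finite (Fset N)")
    case False then show ?thesis by (simp add: b4_Fset N_def[symmetric])
  next
    case True
    have "card (Fset N) = card {f \<in> Fset N. True}" by simp
    also have "\<dots> = (\<Sum>u\<in>{0..N}. card {f\<in>Fset N. gs N f = u \<and> True})"
      by (rule card_split) (use True gs_le in auto)
    finally have "card (Fset N) = (\<Sum>u\<in>{0..N}. card {f\<in>Fset N. gs N f = u})" by simp
    then have "even (card (Fset N))" using term_even by (simp add: dvd_sum)
    then show ?thesis by (simp add: b4_Fset N_def[symmetric])
  qed
qed

end

theorem theorem4p3:
  fixes p r a m :: nat and t ainv :: int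
  assumes "prime p" and "p \<ge> 5" and "a > 0" and "coprime a p" and "m \<ge> 1"
    and "[int a * ainv = 1] (mod int p)"
    and "\<not> QuadRes (int p) (8 * t * ainv + 1)"
  shows "\<forall>n::nat. int p * int n + t \<ge> 0 \<longrightarrow> even (b4 p r a m (nat (int p * int n + t)))"
proof (intro allI impI)
  fix n :: nat
  assume "int p * int n + t \<ge> 0"
  then show "even (b4 p r a m (nat (int p * int n + t)))"
    by (rule final_even[OF assms(1,2,3,4,5,6,7)])
qed


end
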